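(* The Baxter monoid $\mathrm{baxt}_\infty$ satisfies the identities $$ysxt\,xy\,hxky \approx ysxt\,yx\,hxky \quad\text{and}\quad xsyt\,xy\,hxky \approx xsyt\,yx\,hxky.$$
   Context: Let $\mathcal{A}=\{1<2<3<\cdots\}$. Right strict binary search tree: labelled rooted binary tree in which each node's label is $\ge$ every label in its left subtree and $<$ every label in its right subtree; inserting $a$: if empty create node $a$, else with root label $x$ insert into right subtree if $a>x$, left subtree otherwise. $\mathrm{P}_{\mathrm{sylv}}(w_1\cdots w_k)$ is obtained from the empty tree by inserting $w_k,\dots,w_1$ in this order. Left strict binary search tree: each node's label is $>$ every label in its left subtree and $\le$ every label in its right subtree; inserting $a$: if empty create node $a$, else with root label $x$ insert into left subtree if $a<x$, right subtree otherwise. $\mathrm{P}^\sharp(w_1\cdots w_k)$ is obtained from the empty tree by inserting $w_1,\dots,w_k$ in this order. Set $\mathrm{P}_{\mathrm{baxt}}(w)=(\mathrm{P}^\sharp(w),\mathrm{P}_{\mathrm{sylv}}(w))$. The Baxter monoid $\mathrm{baxt}_\infty$ is $\mathcal{A}^*/{\equiv}$ with $u\equiv v\iff\mathrm{P}_{\mathrm{baxt}}(u)=\mathrm{P}_{\mathrm{baxt}}(v)$. A monoid $S$ satisfies an identity $\mathbf{u}\approx\mathbf{v}$ between words over an alphabet of letters if $\varphi(\mathbf{u})=\varphi(\mathbf{v})$ for every assignment $\varphi$ of elements of $S$ (including the identity element) to the letters. *)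

theory Defs
  imports Main
begin

datatype btree = Leaf | Node btree nat btree

fun ins_right :: "nat \<Rightarrow> btree \<Rightarrow> btree" where
  "ins_right a Leaf = Node Leaf a Leaf"
| "ins_right a (Node l x r) =
     (if a > x then Node l x (ins_right a r) else Node (ins_right a l) x r)"

fun ins_left :: "nat \<Rightarrow> btree \<Rightarrow> btree" where
  "ins_left a Leaf = Node Leaf a Leaf"
| "ins_left a (Node l x r) =
     (if a < x then Node (ins_left a l) x r else Node l x (ins_left a r))"

definition P_sylv :: "nat list \<Rightarrow> btree" where
  "P_sylv w = fold ins_right (rev w) Leaf"

definition P_sharp :: "nat list \<Rightarrow> btree" where
  "P_sharp w = fold ins_left w Leaf"

definition P_baxt :: "nat list \<Rightarrow> btree \<times> btree" where
  "P_baxt w = (P_sharp w, P_sylv w)"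

definition baxt_equiv :: "nat list \<Rightarrow> nat list \<Rightarrow> bool" where
  "baxt_equiv u v \<longleftrightarrow> P_baxt u = P_baxt v"

datatype var = X | Y | S | T | H | K

text \<open>baxt_infinity satisfies u ~ v: every assignment of elements of the monoid
  (represented by words over the positive integers, the empty word being the identity)
  to letters gives Baxter-congruent evaluations.\<close>
definition baxt_satisfies :: "var list \<Rightarrow> var list \<Rightarrow> bool" where
  "baxt_satisfies u v \<longleftrightarrow>
     (\<forall>\<phi> :: var \<Rightarrow> nat list. (\<forall>z. \<forall>c \<in> set (\<phi> z). 1 \<le> c) \<longrightarrow>
        baxt_equiv (concat (map \<phi> u)) (concat (map \<phi> v)))"

end

theory Submission
  imports Defs
begin

fun sepL :: "btree \<Rightarrow> nat \<Rightarrow> nat \<Rightarrow> bool" where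
  "sepL Leaf a b = False"
| "sepL (Node l x r) a b =
    (if a < x \<and> b < x then sepL l a b else if x \<le> a \<and> x \<le> b then sepL r a b else True)"

fun sepR :: "btree \<Rightarrow> nat \<Rightarrow> nat \<Rightarrow> bool" where
  "sepR Leaf a b = False"
| "sepR (Node l x r) a b =
    (if a \<le> x \<and> b \<le> x then sepR l a b else if x < a \<and> x < b then sepR r a b else True)"

lemma commL: "a = b \<or> sepL Tr a b \<Longrightarrow> ins_left a (ins_left b Tr) = ins_left b (ins_left a Tr)"
  by (induction Tr) auto

lemma commR: "a = b \<or> sepR Tr a b \<Longrightarrow> ins_right a (ins_right b Tr) = ins_right b (ins_right a Tr)"
  by (induction Tr) auto

lemma sepL_mono: "sepL Tr a b \<Longrightarrow> sepL (ins_left c Tr) a b"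
  by (induction Tr) auto

lemma sepR_mono: "sepR Tr a b \<Longrightarrow> sepR (ins_right c Tr) a b"
  by (induction Tr) auto

lemma sepL_fold: "sepL Tr a b \<Longrightarrow> sepL (fold ins_left w Tr) a b"
  by (induction w arbitrary: Tr) (auto intro: sepL_mono)

lemma sepR_fold: "sepR Tr a b \<Longrightarrow> sepR (fold ins_right w Tr) a b"
  by (induction w arbitrary: Tr) (auto intro: sepR_mono)

lemma sepL_ins: "(a < c \<and> c \<le> b) \<or> (b < c \<and> c \<le> a) \<Longrightarrow> sepL (ins_left c Tr) a b"
  by (induction Tr) auto

lemma sepR_ins: "(a \<le> c \<and> c < b) \<or> (b \<le> c \<and> c < a) \<Longrightarrow> sepR (ins_right c Tr) a b"
  by (induction Tr) auto

lemma sepL_in: "c \<in> set w \<Longrightarrow> (a < c \<and> c \<le> b) \<or> (b < c \<and> c \<le> a) \<Longrightarrow> sepL (fold ins_left w Tr) a b"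
proof (induction w arbitrary: Tr)
  case Nil then show ?case by simp
next
  case (Cons d w)
  show ?case
  proof (cases "c = d")
    case True
    then show ?thesis using Cons.prems by (auto intro: sepL_fold sepL_ins)
  next
    case False
    then show ?thesis using Cons by auto
  qed
qed

lemma sepR_in: "c \<in> set w \<Longrightarrow> (a \<le> c \<and> c < b) \<or> (b \<le> c \<and> c < a) \<Longrightarrow> sepR (fold ins_right w Tr) a b"
proof (induction w arbitrary: Tr)
  case Nil then show ?case by simp
next
  case (Cons d w)
  show ?case
  proof (cases "c = d")
    case True
    then show ?thesis using Cons.prems by (auto intro: sepR_fold sepR_ins)
  next
    case False
    then show ?thesis using Cons by auto
  qed
qed

lemma moveL: "\<forall>a\<in>set Xs. b = a \<or> sepL Tr b a \<Longrightarrow>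
  ins_left b (fold ins_left Xs Tr) = fold ins_left Xs (ins_left b Tr)"
proof (induction Xs arbitrary: Tr)
  case Nil then show ?case by simp
next
  case (Cons a Xs)
  have h: "\<forall>a'\<in>set Xs. b = a' \<or> sepL (ins_left a Tr) b a'" using Cons.prems sepL_mono by (meson list.set_intros(2))
  have "ins_left b (fold ins_left (a # Xs) Tr) = fold ins_left Xs (ins_left b (ins_left a Tr))"
    using Cons.IH[OF h] by simp
  also have "\<dots> = fold ins_left Xs (ins_left a (ins_left b Tr))"
    using commL[of b a Tr] Cons.prems by auto
  finally show ?case by simp
qed

lemma moveR: "\<forall>a\<in>set Xs. b = a \<or> sepR Tr b a \<Longrightarrow>
  ins_right b (fold ins_right Xs Tr) = fold ins_right Xs (ins_right b Tr)"
proof (induction Xs arbitrary: Tr)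
  case Nil then show ?case by simp
next
  case (Cons a Xs)
  have h: "\<forall>a'\<in>set Xs. b = a' \<or> sepR (ins_right a Tr) b a'" using Cons.prems sepR_mono by (meson list.set_intros(2))
  have "ins_right b (fold ins_right (a # Xs) Tr) = fold ins_right Xs (ins_right b (ins_right a Tr))"
    using Cons.IH[OF h] by simp
  also have "\<dots> = fold ins_right Xs (ins_right a (ins_right b Tr))"
    using commR[of b a Tr] Cons.prems by auto
  finally show ?case by simp
qed

lemma swapL: "\<forall>a\<in>set Xs. \<forall>b\<in>set Ys. b = a \<or> sepL Tr b a \<Longrightarrow>
  fold ins_left (Xs @ Ys) Tr = fold ins_left (Ys @ Xs) Tr"
proof (induction Ys arbitrary: Tr)
  case Nil then show ?case by simp
next
  case (Cons b Ys)
  have h: "\<forall>a\<in>set Xs. \<forall>b\<in>set Ys. b = a \<or> sepL (ins_left b' Tr) b a" for b'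
    using Cons.prems sepL_mono by (meson list.set_intros(2))
  have "fold ins_left (Xs @ b # Ys) Tr = fold ins_left Ys (ins_left b (fold ins_left Xs Tr))" by simp
  also have "\<dots> = fold ins_left Ys (fold ins_left Xs (ins_left b Tr))"
    using moveL[of Xs b Tr] Cons.prems by auto
  also have "\<dots> = fold ins_left (Xs @ Ys) (ins_left b Tr)" by simp
  also have "\<dots> = fold ins_left (Ys @ Xs) (ins_left b Tr)" using Cons.IH[OF h] by simp
  finally show ?case by simp
qed

lemma swapR: "\<forall>a\<in>set Xs. \<forall>b\<in>set Ys. b = a \<or> sepR Tr b a \<Longrightarrow>
  fold ins_right (Xs @ Ys) Tr = fold ins_right (Ys @ Xs) Tr"
proof (induction Ys arbitrary: Tr)
  case Nil then show ?case by simp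
next
  case (Cons b Ys)
  have h: "\<forall>a\<in>set Xs. \<forall>b\<in>set Ys. b = a \<or> sepR (ins_right b' Tr) b a" for b'
    using Cons.prems sepR_mono by (meson list.set_intros(2))
  have "fold ins_right (Xs @ b # Ys) Tr = fold ins_right Ys (ins_right b (fold ins_right Xs Tr))" by simp
  also have "\<dots> = fold ins_right Ys (fold ins_right Xs (ins_right b Tr))"
    using moveR[of Xs b Tr] Cons.prems by auto
  also have "\<dots> = fold ins_right (Xs @ Ys) (ins_right b Tr)" by simp
  also have "\<dots> = fold ins_right (Ys @ Xs) (ins_right b Tr)" using Cons.IH[OF h] by simp
  finally show ?case by simp
qed

lemma key:
  assumes "set x \<subseteq> set p" "set y \<subseteq> set p" "set x \<subseteq> set q" "set y \<subseteq> set q"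
  shows "baxt_equiv (p @ x @ y @ q) (p @ y @ x @ q)"
proof -
  let ?Tr = "fold ins_left p Leaf"
  have sL: "\<forall>a\<in>set y. \<forall>b\<in>set x. b = a \<or> sepL ?Tr b a"
  proof (intro ballI)
    fix a b assume a: "a \<in> set y" and b: "b \<in> set x"
    show "b = a \<or> sepL ?Tr b a"
    proof (cases "b < a")
      case True then show ?thesis using sepL_in[of a p b a] a assms by auto
    next
      case False
      then have "b = a \<or> a < b" by auto
      then show ?thesis using sepL_in[of b p b a] b assms by auto
    qed
  qed
  have 1: "P_sharp (p @ x @ y @ q) = P_sharp (p @ y @ x @ q)"
    unfolding P_sharp_def using swapL[OF sL] by simp
  let ?U = "fold ins_right (rev q) Leaf"
  have sR: "\<forall>a\<in>set (rev x). \<forall>b\<in>set (rev y). b = a \<or> sepR ?U b a"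
  proof (intro ballI)
    fix a b assume a: "a \<in> set (rev x)" and b: "b \<in> set (rev y)"
    show "b = a \<or> sepR ?U b a"
    proof (cases "b < a")
      case True then show ?thesis using sepR_in[of b "rev q" b a] b assms by auto
    next
      case False
      then have "b = a \<or> a < b" by auto
      then show ?thesis using sepR_in[of a "rev q" b a] a assms by auto
    qed
  qed
  have 2: "P_sylv (p @ x @ y @ q) = P_sylv (p @ y @ x @ q)"
    unfolding P_sylv_def using swapR[OF sR] by simp
  show ?thesis using 1 2 unfolding baxt_equiv_def P_baxt_def by simp
qed

theorem theorem4p9:
  shows "baxt_satisfies [Y,S,X,T,X,Y,H,X,K,Y] [Y,S,X,T,Y,X,H,X,K,Y]
       \<and> baxt_satisfies [X,S,Y,T,X,Y,H,X,K,Y] [X,S,Y,T,Y,X,H,X,K,Y]"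
  unfolding baxt_satisfies_def
proof (intro conjI allI impI)
  fix \<phi> :: "var \<Rightarrow> nat list"
  show "baxt_equiv (concat (map \<phi> [Y,S,X,T,X,Y,H,X,K,Y])) (concat (map \<phi> [Y,S,X,T,Y,X,H,X,K,Y]))"
    using key[of "\<phi> X" "\<phi> Y @ \<phi> S @ \<phi> X @ \<phi> T" "\<phi> Y" "\<phi> H @ \<phi> X @ \<phi> K @ \<phi> Y"] by auto
  show "baxt_equiv (concat (map \<phi> [X,S,Y,T,X,Y,H,X,K,Y])) (concat (map \<phi> [X,S,Y,T,Y,X,H,X,K,Y]))"
    using key[of "\<phi> X" "\<phi> X @ \<phi> S @ \<phi> Y @ \<phi> T" "\<phi> Y" "\<phi> H @ \<phi> X @ \<phi> K @ \<phi> Y"] by auto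
qed

end
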